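(* A snake graph $\mathcal{G}$ is palindromic of even length if and only if it has a rotational symmetry at its center tile.
   Context: A tile is a unit square in the plane with sides parallel to the coordinate axes, viewed as a graph with 4 vertices and 4 edges. A snake graph with $d\ge 1$ tiles is a planar graph which is the union of tiles $G_1,\dots,G_d$ such that for each $i$, $G_{i+1}$ is the translate of $G_i$ by $(0,1)$ or by $(1,0)$; thus $G_i$ and $G_{i+1}$ share exactly one edge $e_i$ (the north edge of $G_i$, or its east edge). Snake graphs are considered up to translation. A sign function on a snake graph is a map $f$ from its set of edges to $\{+,-\}$ such that in every tile the north and west edges have the same sign, the south and east edges have the same sign, and the north and south edges have opposite signs. For a sequence $(a_1,\dots,a_n)$ of positive integers with $d=a_1+\cdots+a_n-1\ge 1$, the snake graph $\mathcal{G}[a_1,\dots,a_n]$ is the unique snake graph with tiles $G_1,\dots,G_d$ for which there exist a sign function $f$ and an edge $e_d\in\{\text{north edge of }G_d,\ \text{east edge of }G_d\}$ such that, with $e_0$ the south edge of $G_1$ and $e_i$ ($1\le i\le d-1$) the edge shared by $G_i$ and $G_{i+1}$, the sequence $(f(e_0),f(e_1),\dots,f(e_d))$ consists of $a_1$ copies of a sign $s$, followed by $a_2$ copies of $-s$, then $a_3$ copies of $s$, and so on alternately. A snake graph $\mathcal{G}$ is called palindromic of even length if $\mathcal{G}=\mathcal{G}[a_1,\dots,a_n]$ for some sequence of positive integers with $n$ even and $(a_1,\dots,a_n)=(a_n,\dots,a_1)$. A snake graph has a rotational symmetry at its center tile if it has a tile $G_i$ such that the rotation by $180^\circ$ about the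 center of $G_i$ maps the graph onto itself. *)

theory Defs
  imports Main
begin

(* A snake graph with d tiles, up to translation, is encoded by its list of
   d-1 steps: True = next tile is the translate by (0,1) (north),
   False = translate by (1,0) (east).  Tile i (0-indexed, i < d) has lower-left
   corner tile_pos s i, with tile 0 at the origin. *)

type_synonym point = "int \<times> int"
type_synonym edge = "point set"

fun tile_pos :: "bool list \<Rightarrow> nat \<Rightarrow> point" where
  "tile_pos s 0 = (0, 0)"
| "tile_pos s (Suc i) =
     (case tile_pos s i of (x, y) \<Rightarrow> if s ! i then (x, y + 1) else (x + 1, y))"

definition num_tiles :: "bool list \<Rightarrow> nat" where
  "num_tiles s = length s + 1"

definition south_edge :: "point \<Rightarrow> edge" where
  "south_edge p = (case p of (x, y) \<Rightarrow> {(x, y), (x + 1, y)})"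
definition north_edge :: "point \<Rightarrow> edge" where
  "north_edge p = (case p of (x, y) \<Rightarrow> {(x, y + 1), (x + 1, y + 1)})"
definition west_edge :: "point \<Rightarrow> edge" where
  "west_edge p = (case p of (x, y) \<Rightarrow> {(x, y), (x, y + 1)})"
definition east_edge :: "point \<Rightarrow> edge" where
  "east_edge p = (case p of (x, y) \<Rightarrow> {(x + 1, y), (x + 1, y + 1)})"

definition tile_vertices :: "point \<Rightarrow> point set" where
  "tile_vertices p = (case p of (x, y) \<Rightarrow> {(x, y), (x + 1, y), (x, y + 1), (x + 1, y + 1)})"
definition tile_edges :: "point \<Rightarrow> edge set" where
  "tile_edges p = {south_edge p, north_edge p, west_edge p, east_edge p}"

definition snake_vertices :: "bool list \<Rightarrow> point set" where
  "snake_vertices s = (\<Union>i<num_tiles s. tile_vertices (tile_pos s i))"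
definition snake_edges :: "bool list \<Rightarrow> edge set" where
  "snake_edges s = (\<Union>i<num_tiles s. tile_edges (tile_pos s i))"

(* rotation by 180 degrees about the center of the tile with lower-left corner c *)
definition rot180 :: "point \<Rightarrow> point \<Rightarrow> point" where
  "rot180 c q = (case c of (x, y) \<Rightarrow> case q of (u, v) \<Rightarrow> (2 * x + 1 - u, 2 * y + 1 - v))"

definition rot_symmetric_at_tile :: "bool list \<Rightarrow> bool" where
  "rot_symmetric_at_tile s \<longleftrightarrow>
     (\<exists>i<num_tiles s.
        rot180 (tile_pos s i) ` snake_vertices s = snake_vertices s \<and>
        (\<lambda>e. rot180 (tile_pos s i) ` e) ` snake_edges s = snake_edges s)"

(* sign function: signs + / - encoded as True / False *)
definition sign_function :: "bool list \<Rightarrow> (edge \<Rightarrow> bool) \<Rightarrow> bool" where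
  "sign_function s f \<longleftrightarrow>
     (\<forall>i<num_tiles s. let p = tile_pos s i in
        f (north_edge p) = f (west_edge p) \<and>
        f (south_edge p) = f (east_edge p) \<and>
        f (north_edge p) \<noteq> f (south_edge p))"

(* the edge e_{i+1} shared by tiles i and i+1 (0-indexed) *)
definition inner_edge :: "bool list \<Rightarrow> nat \<Rightarrow> edge" where
  "inner_edge s i = (if s ! i then north_edge (tile_pos s i) else east_edge (tile_pos s i))"

fun alt_seq :: "bool \<Rightarrow> nat list \<Rightarrow> bool list" where
  "alt_seq b [] = []"
| "alt_seq b (x # xs) = replicate x b @ alt_seq (\<not> b) xs"

definition is_snake_of_seq :: "bool list \<Rightarrow> nat list \<Rightarrow> bool" where
  "is_snake_of_seq s a \<longleftrightarrow>
     (\<forall>x\<in>set a. x > 0) \<and> int (num_tiles s) = int (sum_list a) - 1 \<and>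
     (\<exists>f ed b. sign_function s f \<and>
        ed \<in> {north_edge (tile_pos s (num_tiles s - 1)), east_edge (tile_pos s (num_tiles s - 1))} \<and>
        [f (south_edge (tile_pos s 0))] @ map (\<lambda>i. f (inner_edge s i)) [0..<length s] @ [f ed]
          = alt_seq b a)"

definition palindromic_even :: "bool list \<Rightarrow> bool" where
  "palindromic_even s \<longleftrightarrow>
     (\<exists>a. (\<forall>x\<in>set a. x > 0) \<and> even (length a) \<and> rev a = a \<and> is_snake_of_seq s a)"

end

theory Submission
  imports Defs
begin



definition stepf :: "point \<Rightarrow> bool \<Rightarrow> point" where
  "stepf q b = (case q of (x, y) \<Rightarrow> if b then (x, y + 1) else (x + 1, y))"

fun tpos :: "point \<Rightarrow> bool list \<Rightarrow> nat \<Rightarrow> point" where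
  "tpos p s 0 = p"
| "tpos p s (Suc i) = stepf (tpos p s i) (s ! i)"

lemma tile_pos_tpos: "tile_pos s i = tpos (0,0) s i"
  by (induction i) (auto simp: stepf_def)

lemma tpos_cons: "tpos p (x # r) (Suc i) = tpos (stepf p x) r i"
  by (induction i) auto

definition SV :: "point \<Rightarrow> bool list \<Rightarrow> point set" where
  "SV p s = (\<Union>i<Suc (length s). tile_vertices (tpos p s i))"
definition SE :: "point \<Rightarrow> bool list \<Rightarrow> edge set" where
  "SE p s = (\<Union>i<Suc (length s). tile_edges (tpos p s i))"

lemma SV_Nil: "SV p [] = tile_vertices p"
proof -
  have "{..<Suc 0} = {0::nat}" by auto
  thus ?thesis by (simp add: SV_def)
qed

lemma UN_shift: "(\<Union>i<Suc n. F i) = F 0 \<union> (\<Union>i<n. F (Suc i))"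
  unfolding lessThan_Suc_eq_insert_0 by (simp add: image_image)

lemma SV_Cons: "SV p (x # r) = tile_vertices p \<union> SV (stepf p x) r"
  unfolding SV_def by (simp only: UN_shift tpos_cons length_Cons tpos.simps(1))

lemma SV_ge: "(u, v) \<in> SV (a, b) s \<Longrightarrow> a \<le> u \<and> b \<le> v"
proof (induction s arbitrary: a b)
  case Nil thus ?case by (auto simp: SV_Nil tile_vertices_def)
next
  case (Cons x r)
  show ?case
  proof (cases "(u, v) \<in> tile_vertices (a, b)")
    case True thus ?thesis by (auto simp: tile_vertices_def)
  next
    case False
    hence "(u, v) \<in> SV (stepf (a, b) x) r" using Cons.prems by (simp add: SV_Cons)
    thus ?thesis using Cons.IH by (cases x) (fastforce simp: stepf_def)+
  qed
qed

lemma SV_TV: "tile_vertices p \<subseteq> SV p s"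
  unfolding SV_def by (metis UN_upper lessThan_iff tpos.simps(1) zero_less_Suc)

lemma SV_self: "p \<in> SV p s"
  using SV_TV[of p s] by (cases p) (auto simp: tile_vertices_def)

lemma SV_start: "SV p s = SV q t \<Longrightarrow> p = q"
proof -
  assume h: "SV p s = SV q t"
  obtain a b where p: "p = (a, b)" by (cases p)
  obtain c d where q: "q = (c, d)" by (cases q)
  have "p \<in> SV q t" using h SV_self[of p s] by simp
  hence 1: "c \<le> a \<and> d \<le> b" using SV_ge p q by blast
  have "q \<in> SV p s" using h SV_self[of q t] by simp
  hence "a \<le> c \<and> b \<le> d" using SV_ge p q by blast
  thus ?thesis using 1 p q by simp
qed

lemma SV_strip_T: "SV (a, b) (True # r) \<inter> {w. b + 1 \<le> snd w} = SV (a, b + 1) r"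
proof
  show "SV (a, b + 1) r \<subseteq> SV (a, b) (True # r) \<inter> {w. b + 1 \<le> snd w}"
    using SV_ge[of _ _ a "b+1" r] by (auto simp: SV_Cons stepf_def)
  show "SV (a, b) (True # r) \<inter> {w. b + 1 \<le> snd w} \<subseteq> SV (a, b + 1) r"
    using SV_TV[of "(a, b+1)" r] by (auto simp: SV_Cons stepf_def tile_vertices_def)
qed

lemma SV_strip_F: "SV (a, b) (False # r) \<inter> {w. a + 1 \<le> fst w} = SV (a + 1, b) r"
proof
  show "SV (a + 1, b) r \<subseteq> SV (a, b) (False # r) \<inter> {w. a + 1 \<le> fst w}"
    using SV_ge[of _ _ "a+1" b r] by (auto simp: SV_Cons stepf_def)
  show "SV (a, b) (False # r) \<inter> {w. a + 1 \<le> fst w} \<subseteq> SV (a + 1, b) r"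
    using SV_TV[of "(a+1, b)" r] by (auto simp: SV_Cons stepf_def tile_vertices_def)
qed

lemma notin_T: "(a + 2, b) \<notin> SV (a, b) (True # r)"
  using SV_ge[of "a+2" b a "b+1" r] by (auto simp: SV_Cons stepf_def tile_vertices_def)

lemma in_F: "(a + 2, b) \<in> SV (a, b) (False # r)"
proof -
  have "(a + 2, b) \<in> tile_vertices (a+1, b)" by (simp add: tile_vertices_def)
  thus ?thesis using SV_TV[of "(a+1, b)" r] by (auto simp: SV_Cons stepf_def)
qed

lemma in_T: "(a, b + 2) \<in> SV (a, b) (True # r)"
proof -
  have "(a, b + 2) \<in> tile_vertices (a, b+1)" by (simp add: tile_vertices_def)
  thus ?thesis using SV_TV[of "(a, b+1)" r] by (auto simp: SV_Cons stepf_def)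
qed

lemma notin_Nil: "(a + 2, b) \<notin> SV (a, b) []" "(a, b + 2) \<notin> SV (a, b) []"
  by (auto simp: SV_Nil tile_vertices_def)

lemma SV_nonNil: "(a + 2, b) \<in> SV (a, b) (x # r) \<or> (a, b + 2) \<in> SV (a, b) (x # r)"
  using in_F in_T by (cases x) auto

lemma SV_inj: "SV p s = SV q t \<Longrightarrow> p = q \<and> s = t"
proof (induction s arbitrary: p q t)
  case Nil
  have pq: "p = q" using SV_start[OF Nil] .
  obtain a b where p: "p = (a, b)" by (cases p)
  show ?case
  proof (cases t)
    case (Cons y r)
    thus ?thesis using Nil pq p SV_nonNil[of a b y r] notin_Nil[of a b] by auto
  qed (use pq in auto)
next
  case (Cons x s)
  have pq: "p = q" using SV_start[OF Cons.prems] .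
  obtain a b where p: "p = (a, b)" by (cases p)
  show ?case
  proof (cases t)
    case Nil
    thus ?thesis using Cons.prems pq p SV_nonNil[of a b x s] notin_Nil[of a b] by auto
  next
    case (Cons y r)
    have e: "SV (a, b) (x # s) = SV (a, b) (y # r)" using Cons.prems[unfolded \<open>t = y # r\<close>] pq p by simp
    show ?thesis
    proof (cases x; cases y)
      assume "x" "y"
      hence "SV (a, b + 1) s = SV (a, b + 1) r" using e SV_strip_T[of a b] by metis
      thus ?thesis using Cons.IH pq \<open>x\<close> \<open>y\<close> \<open>t = y # r\<close> by blast
    next
      assume "\<not> x" "\<not> y"
      hence "SV (a + 1, b) s = SV (a + 1, b) r" using e SV_strip_F[of a b] by metis
      thus ?thesis using Cons.IH pq \<open>\<not>x\<close> \<open>\<not>y\<close> \<open>t = y # r\<close> by blast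
    next
      assume "x" "\<not> y"
      thus ?thesis using e notin_T[of a b s] in_F[of a b r] by auto
    next
      assume "\<not> x" "y"
      thus ?thesis using e notin_T[of a b r] in_F[of a b s] by auto
    qed
  qed
qed




definition rotpt :: "point \<Rightarrow> point \<Rightarrow> point" where
  "rotpt c q = (case c of (x, y) \<Rightarrow> case q of (u, v) \<Rightarrow> (2 * x - u, 2 * y - v))"

lemma rot_step: "stepf (rotpt c (stepf a b)) b = rotpt c a"
  by (cases c; cases a) (auto simp: stepf_def rotpt_def)

lemma tpos_rev:
  "j \<le> length s \<Longrightarrow> tpos (rotpt c (tpos p s (length s))) (rev s) j = rotpt c (tpos p s (length s - j))"
proof (induction j)
  case 0 thus ?case by simp
next
  case (Suc j)
  have j: "j < length s" using Suc.prems by simp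
  have "tpos (rotpt c (tpos p s (length s))) (rev s) (Suc j)
      = stepf (rotpt c (tpos p s (length s - j))) (s ! (length s - Suc j))"
    using Suc j by (simp add: rev_nth)
  also have "length s - j = Suc (length s - Suc j)" using j by simp
  also have "stepf (rotpt c (tpos p s (Suc (length s - Suc j)))) (s ! (length s - Suc j))
      = rotpt c (tpos p s (length s - Suc j))"
    by (simp only: tpos.simps rot_step)
  finally show ?case .
qed

lemma rot_TV: "rot180 c ` tile_vertices q = tile_vertices (rotpt c q)"
  by (cases c; cases q) (auto simp: rot180_def rotpt_def tile_vertices_def algebra_simps)

lemma rot_TE: "(\<lambda>e. rot180 c ` e) ` tile_edges q = tile_edges (rotpt c q)"
proof -
  obtain x y where c: "c = (x, y)" by (cases c)
  obtain u v where q: "q = (u, v)" by (cases q)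
  have 1: "rot180 c ` south_edge q = north_edge (rotpt c q)"
    by (auto simp: c q rot180_def rotpt_def south_edge_def north_edge_def algebra_simps)
  have 2: "rot180 c ` north_edge q = south_edge (rotpt c q)"
    by (auto simp: c q rot180_def rotpt_def south_edge_def north_edge_def algebra_simps)
  have 3: "rot180 c ` west_edge q = east_edge (rotpt c q)"
    by (auto simp: c q rot180_def rotpt_def west_edge_def east_edge_def algebra_simps)
  have 4: "rot180 c ` east_edge q = west_edge (rotpt c q)"
    by (auto simp: c q rot180_def rotpt_def west_edge_def east_edge_def algebra_simps)
  show ?thesis unfolding tile_edges_def by (auto simp: 1 2 3 4)
qed

lemma UN_flip: "(\<Union>j<Suc m. F (m - j)) = (\<Union>i<Suc m. F i)"
proof
  show "(\<Union>j<Suc m. F (m - j)) \<subseteq> (\<Union>i<Suc m. F i)" by (auto intro!: bexI[where x="m - _"])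
  show "(\<Union>i<Suc m. F i) \<subseteq> (\<Union>j<Suc m. F (m - j))"
  proof
    fix x assume "x \<in> (\<Union>i<Suc m. F i)"
    then obtain i where "i < Suc m" "x \<in> F i" by auto
    hence "m - i < Suc m" "x \<in> F (m - (m - i))" by auto
    thus "x \<in> (\<Union>j<Suc m. F (m - j))" by blast
  qed
qed

lemma SV_rot: "rot180 c ` SV p s = SV (rotpt c (tpos p s (length s))) (rev s)"
proof -
  have "rot180 c ` SV p s = (\<Union>i<Suc (length s). tile_vertices (rotpt c (tpos p s i)))"
    by (simp add: SV_def image_UN rot_TV)
  also have "\<dots> = (\<Union>j<Suc (length s). tile_vertices (rotpt c (tpos p s (length s - j))))"
    by (rule UN_flip[symmetric])
  also have "\<dots> = SV (rotpt c (tpos p s (length s))) (rev s)"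
    unfolding SV_def by (auto simp: tpos_rev)
  finally show ?thesis .
qed

lemma SE_rot: "(\<lambda>e. rot180 c ` e) ` SE p s = SE (rotpt c (tpos p s (length s))) (rev s)"
proof -
  have "(\<lambda>e. rot180 c ` e) ` SE p s = (\<Union>i<Suc (length s). tile_edges (rotpt c (tpos p s i)))"
    by (simp add: SE_def image_UN rot_TE)
  also have "\<dots> = (\<Union>j<Suc (length s). tile_edges (rotpt c (tpos p s (length s - j))))"
    by (rule UN_flip[symmetric])
  also have "\<dots> = SE (rotpt c (tpos p s (length s))) (rev s)"
    unfolding SE_def by (auto simp: tpos_rev)
  finally show ?thesis .
qed

lemma tpos_trans: "tpos (a, b) s j = (a + fst (tpos (0, 0) s j), b + snd (tpos (0, 0) s j))"
  by (induction j) (auto simp: stepf_def split: prod.splits)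

lemma tpos_sum: "fst (tpos p s j) + snd (tpos p s j) = fst p + snd p + int j"
  by (induction j) (auto simp: stepf_def split: prod.splits)

lemma snake_SV: "snake_vertices s = SV (0, 0) s"
  by (simp add: snake_vertices_def SV_def num_tiles_def tile_pos_tpos)
lemma snake_SE: "snake_edges s = SE (0, 0) s"
  by (simp add: snake_edges_def SE_def num_tiles_def tile_pos_tpos)

lemma rot_iff: "rot_symmetric_at_tile s \<longleftrightarrow> even (length s) \<and> rev s = s"
proof
  assume "rot_symmetric_at_tile s"
  then obtain i where i: "i < num_tiles s"
    and h: "rot180 (tile_pos s i) ` snake_vertices s = snake_vertices s"
    unfolding rot_symmetric_at_tile_def by blast
  define c where "c = tpos (0, 0) s i"
  have "SV (rotpt c (tpos (0,0) s (length s))) (rev s) = SV (0, 0) s"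
    using h by (simp add: SV_rot snake_SV tile_pos_tpos c_def)
  from SV_inj[OF this] have r: "rotpt c (tpos (0,0) s (length s)) = (0, 0)" and rs: "rev s = s"
    by auto
  obtain x y where cxy: "c = (x, y)" by (cases c)
  obtain X Y where XY: "tpos (0,0) s (length s) = (X, Y)" by (cases "tpos (0,0) s (length s)")
  have "x + y = int i" using tpos_sum[of "(0,0)" s i] cxy c_def by simp
  moreover have "X + Y = int (length s)" using tpos_sum[of "(0,0)" s "length s"] XY by simp
  moreover have "2 * x = X" "2 * y = Y" using r cxy XY by (auto simp: rotpt_def)
  ultimately have "int (length s) = 2 * int i" by simp
  hence "even (length s)" by presburger
  with rs show "even (length s) \<and> rev s = s" by simp
next
  assume a: "even (length s) \<and> rev s = s"
  define h where "h = length s div 2"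
  have hm: "length s - h = h" "h < num_tiles s" using a by (auto simp: h_def num_tiles_def)
  define c where "c = tpos (0, 0) s h"
  obtain x y where cxy: "c = (x, y)" by (cases c)
  obtain X Y where XY: "tpos (0,0) s (length s) = (X, Y)" by (cases "tpos (0,0) s (length s)")
  have "tpos (rotpt (0,0) (tpos (0,0) s (length s))) (rev s) h = rotpt (0,0) (tpos (0,0) s (length s - h))"
    by (rule tpos_rev) (simp add: h_def)
  hence "tpos (- X, - Y) s h = (- x, - y)" using a hm cxy XY c_def by (simp add: rotpt_def)
  hence "X = 2 * x" "Y = 2 * y" using tpos_trans[of "- X" "- Y" s h] cxy c_def by auto
  hence r0: "rotpt c (tpos (0,0) s (length s)) = (0, 0)" using cxy XY by (simp add: rotpt_def)
  have "rot180 (tile_pos s h) ` snake_vertices s = snake_vertices s"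
    using r0 a by (simp add: SV_rot snake_SV tile_pos_tpos c_def)
  moreover have "(\<lambda>e. rot180 (tile_pos s h) ` e) ` snake_edges s = snake_edges s"
    using r0 a by (simp add: SE_rot snake_SE tile_pos_tpos c_def)
  ultimately show "rot_symmetric_at_tile s" unfolding rot_symmetric_at_tile_def using hm by blast
qed




lemma alt_len: "length (alt_seq b a) = sum_list a"
  by (induction a arbitrary: b) auto

lemma alt_snoc: "alt_seq b (xs @ [y]) = alt_seq b xs @ replicate y (if even (length xs) then b else \<not> b)"
  by (induction xs arbitrary: b) auto

lemma alt_rev: "rev (alt_seq b a) = alt_seq (if even (length a) then \<not> b else b) (rev a)"
  by (induction a rule: rev_induct) (auto simp: alt_snoc)

lemma alt_map: "map Not (alt_seq b a) = alt_seq (\<not> b) a"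
  by (induction a arbitrary: b) auto

lemma alt_hd: "\<forall>x\<in>set a. 0 < x \<Longrightarrow> a \<noteq> [] \<Longrightarrow> alt_seq b a \<noteq> [] \<and> hd (alt_seq b a) = b"
  by (cases a) (auto simp: hd_append)

lemma rep_app_inj:
  "(l1 = [] \<or> hd l1 \<noteq> b) \<Longrightarrow> (l2 = [] \<or> hd l2 \<noteq> b) \<Longrightarrow> replicate x b @ l1 = replicate y b @ l2
   \<Longrightarrow> x = y \<and> l1 = l2"
proof (induction x arbitrary: y)
  case 0 thus ?case by (cases y) auto
next
  case (Suc x) thus ?case by (cases y) auto
qed

lemma alt_uniq:
  "\<forall>x\<in>set a. 0 < x \<Longrightarrow> \<forall>x\<in>set a'. 0 < x \<Longrightarrow> alt_seq b a = alt_seq b' a' \<Longrightarrow> a \<noteq> []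
   \<Longrightarrow> b = b' \<and> a = a'"
proof (induction a arbitrary: b a' b')
  case Nil thus ?case by simp
next
  case (Cons x xs)
  have "a' \<noteq> []" using Cons.prems alt_hd[of "x # xs" b] by auto
  then obtain y ys where a': "a' = y # ys" by (cases a') auto
  have "hd (alt_seq b (x # xs)) = b" using alt_hd[of "x # xs" b] Cons.prems(1) by blast
  moreover have "hd (alt_seq b' a') = b'" using alt_hd[of a' b'] Cons.prems(2) \<open>a' \<noteq> []\<close> by blast
  ultimately have bb: "b = b'" using Cons.prems(3) by simp
  have e: "replicate x b @ alt_seq (\<not> b) xs = replicate y b @ alt_seq (\<not> b) ys"
    using Cons.prems a' bb by simp
  have h1: "alt_seq (\<not> b) xs = [] \<or> hd (alt_seq (\<not> b) xs) \<noteq> b"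
    using alt_hd[of xs "\<not> b"] Cons.prems by (cases "xs = []") auto
  have h2: "alt_seq (\<not> b) ys = [] \<or> hd (alt_seq (\<not> b) ys) \<noteq> b"
    using alt_hd[of ys "\<not> b"] Cons.prems a' by (cases "ys = []") auto
  from rep_app_inj[OF h1 h2 e] have xy: "x = y" and r: "alt_seq (\<not> b) xs = alt_seq (\<not> b) ys" by auto
  show ?case
  proof (cases "xs = []")
    case True
    hence "ys = []" using r alt_hd[of ys "\<not> b"] Cons.prems a' by auto
    thus ?thesis using True xy bb a' by simp
  next
    case False
    hence "xs = ys" using Cons.IH[OF _ _ r] Cons.prems a' by auto
    thus ?thesis using xy bb a' by simp
  qed
qed

lemma alt_exists: "c = [] \<or> hd c = b \<Longrightarrow> \<exists>a. (\<forall>x\<in>set a. 0 < x) \<and> alt_seq b a = c"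
proof (induction c arbitrary: b)
  case Nil show ?case by (rule exI[of _ "[]"]) simp
next
  case (Cons y c)
  hence yb: "y = b" by (metis list.sel(1) list.simps(3))
  show ?case
  proof (cases "c = []")
    case True
    have "alt_seq b [1] = y # c" using True yb by simp
    moreover have "\<forall>x\<in>set [1::nat]. 0 < x" by simp
    ultimately show ?thesis by blast
  next
    case False
    show ?thesis
    proof (cases "hd c = b")
      case True
      have "\<exists>a. (\<forall>x\<in>set a. 0 < x) \<and> alt_seq b a = c" using True by (intro Cons.IH) simp
      then obtain a where a: "\<forall>x\<in>set a. 0 < x" "alt_seq b a = c" by blast
      obtain z rest where zr: "a = z # rest" using False a(2) by (cases a) auto
      have "alt_seq b (Suc z # rest) = y # c" using a(2) zr yb by simp
      moreover have "\<forall>x\<in>set (Suc z # rest). 0 < x" using a(1) zr by simp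
      ultimately show ?thesis by blast
    next
      case nb: False
      hence "hd c = (\<not> b)" by simp
      hence "\<exists>a. (\<forall>x\<in>set a. 0 < x) \<and> alt_seq (\<not> b) a = c" by (intro Cons.IH) simp
      then obtain a where a: "\<forall>x\<in>set a. 0 < x" "alt_seq (\<not> b) a = c" by blast
      have "alt_seq b (1 # a) = y # c" using a(2) yb by simp
      moreover have "\<forall>x\<in>set (1 # a). 0 < x" using a(1) by simp
      ultimately show ?thesis by blast
    qed
  qed
qed

lemma pal_iff:
  assumes "c \<noteq> []"
  shows "(\<exists>a b. (\<forall>x\<in>set a. 0 < x) \<and> even (length a) \<and> rev a = a \<and> alt_seq b a = c)
         \<longleftrightarrow> rev c = map Not c"
proof
  assume "\<exists>a b. (\<forall>x\<in>set a. 0 < x) \<and> even (length a) \<and> rev a = a \<and> alt_seq b a = c"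
  then obtain a b where "even (length a)" "rev a = a" "alt_seq b a = c" by blast
  thus "rev c = map Not c" using alt_rev[of b a] alt_map[of b a] by auto
next
  assume r: "rev c = map Not c"
  obtain a where a: "\<forall>x\<in>set a. 0 < x" "alt_seq (hd c) a = c" using alt_exists[of c "hd c"] by blast
  have ne: "a \<noteq> []" using a assms by auto
  have "alt_seq (if even (length a) then \<not> hd c else hd c) (rev a) = alt_seq (\<not> hd c) a"
    using r a alt_rev[of "hd c" a] alt_map[of "hd c" a] by simp
  from alt_uniq[OF _ _ this] a ne
  have "(if even (length a) then \<not> hd c else hd c) = (\<not> hd c)" "rev a = a" by auto
  hence "even (length a)" "rev a = a" by (auto split: if_splits)
  thus "\<exists>a b. (\<forall>x\<in>set a. 0 < x) \<and> even (length a) \<and> rev a = a \<and> alt_seq b a = c"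
    using a by blast
qed




lemma south_next_T: "s ! i \<Longrightarrow> south_edge (tile_pos s (Suc i)) = north_edge (tile_pos s i)"
  by (cases "tile_pos s i") (simp add: south_edge_def north_edge_def)

lemma west_next_F: "\<not> s ! i \<Longrightarrow> west_edge (tile_pos s (Suc i)) = east_edge (tile_pos s i)"
  by (cases "tile_pos s i") (simp add: west_edge_def east_edge_def)

lemma N_ne_E: "north_edge p \<noteq> east_edge p"
  by (cases p) (auto simp: north_edge_def east_edge_def doubleton_eq_iff)

lemma sign_S:
  assumes f: "sign_function s f"
  shows "i < num_tiles s \<Longrightarrow> f (south_edge (tile_pos s i)) = (f (south_edge (tile_pos s 0)) \<noteq> odd i)"
proof (induction i)
  case 0 thus ?case by simp
next
  case (Suc i)
  have i: "i < num_tiles s" using Suc.prems by simp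
  have ti: "f (north_edge (tile_pos s i)) = f (west_edge (tile_pos s i)) \<and>
        f (south_edge (tile_pos s i)) = f (east_edge (tile_pos s i)) \<and>
        f (north_edge (tile_pos s i)) \<noteq> f (south_edge (tile_pos s i))"
    using f i unfolding sign_function_def Let_def by blast
  have ti1: "f (north_edge (tile_pos s (Suc i))) = f (west_edge (tile_pos s (Suc i))) \<and>
        f (south_edge (tile_pos s (Suc i))) = f (east_edge (tile_pos s (Suc i))) \<and>
        f (north_edge (tile_pos s (Suc i))) \<noteq> f (south_edge (tile_pos s (Suc i)))"
    using f Suc.prems unfolding sign_function_def Let_def by blast
  have "f (south_edge (tile_pos s (Suc i))) = (\<not> f (south_edge (tile_pos s i)))"
  proof (cases "s ! i")
    case True thus ?thesis using south_next_T[OF True] ti by metis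
  next
    case False thus ?thesis using west_next_F[OF False] ti ti1 by metis
  qed
  thus ?case using Suc.IH i by simp
qed

definition cseq :: "bool \<Rightarrow> bool list \<Rightarrow> bool \<Rightarrow> bool list" where
  "cseq \<sigma> s t = map (\<lambda>k. (\<not> \<sigma> \<noteq> odd k) \<noteq> (True # s @ [t]) ! k) [0..<length s + 2]"

lemma seq_eq:
  assumes f: "sign_function s f"
    and ed: "ed \<in> {north_edge (tile_pos s (num_tiles s - 1)), east_edge (tile_pos s (num_tiles s - 1))}"
  shows "[f (south_edge (tile_pos s 0))] @ map (\<lambda>i. f (inner_edge s i)) [0..<length s] @ [f ed]
       = cseq (f (south_edge (tile_pos s 0))) s (ed = north_edge (tile_pos s (num_tiles s - 1)))"
    (is "?L = cseq ?\<sigma> s ?t")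
proof (rule nth_equalityI)
  show "length ?L = length (cseq ?\<sigma> s ?t)" by (simp add: cseq_def)
next
  fix k assume k: "k < length ?L"
  hence k2: "k < length s + 2" by simp
  have tile: "\<And>i. i < num_tiles s \<Longrightarrow> f (north_edge (tile_pos s i)) = (\<not> f (south_edge (tile_pos s i)))
      \<and> f (east_edge (tile_pos s i)) = f (south_edge (tile_pos s i))"
    using f unfolding sign_function_def Let_def by metis
  have rhs: "cseq ?\<sigma> s ?t ! k = ((\<not> ?\<sigma> \<noteq> odd k) \<noteq> (True # s @ [?t]) ! k)"
    using k2 unfolding cseq_def by (simp del: upt_Suc)
  have "k = 0 \<or> (\<exists>i. k = Suc i \<and> i < length s) \<or> k = length s + 1" using k2
    by (cases k) auto
  then consider "k = 0" | i where "k = Suc i" "i < length s" | "k = length s + 1"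
    by blast
  then show "?L ! k = cseq ?\<sigma> s ?t ! k"
  proof cases
    case 1 thus ?thesis using rhs by simp
  next
    case 2
    have "?L ! k = f (inner_edge s i)" using 2 by (simp add: nth_append)
    moreover have "i < num_tiles s" using 2 by (simp add: num_tiles_def)
    ultimately show ?thesis using rhs 2 tile[of i] sign_S[OF f, of i]
      by (cases "s ! i") (auto simp: inner_edge_def nth_append)
  next
    case 3
    have lk: "?L ! k = f ed" using 3 by (simp add: nth_append)
    have m: "num_tiles s - 1 = length s" "length s < num_tiles s" by (auto simp: num_tiles_def)
    have nt: "(True # s @ [?t]) ! k = ?t" using 3 by (simp add: nth_append)
    show ?thesis using lk rhs nt ed m tile[of "length s"] sign_S[OF f, of "length s"] 3 N_ne_E
      by (auto)
  qed
qed

lemma K: "rev (cseq \<sigma> s t) = map Not (cseq \<sigma> s t) \<longleftrightarrow> even (length s) \<and> rev s = s \<and> t"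
proof -
  define u where "u = True # s @ [t]"
  define d where "d = length s + 1"
  have lu: "length u = Suc d" by (simp add: u_def d_def)
  have lc: "length (cseq \<sigma> s t) = Suc d" by (simp add: cseq_def d_def)
  have cn: "\<And>k. k < Suc d \<Longrightarrow> cseq \<sigma> s t ! k = ((\<not> \<sigma> \<noteq> odd k) \<noteq> u ! k)"
    unfolding cseq_def u_def d_def by (simp del: upt_Suc)
  have "rev (cseq \<sigma> s t) = map Not (cseq \<sigma> s t) \<longleftrightarrow>
        (\<forall>k<Suc d. cseq \<sigma> s t ! (d - k) = (\<not> cseq \<sigma> s t ! k))"
    by (simp add: list_eq_iff_nth_eq rev_nth lc)
  also have "\<dots> \<longleftrightarrow> (\<forall>k<Suc d. u ! (d - k) = (u ! k \<noteq> even d))"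
  proof -
    have "\<And>k. k < Suc d \<Longrightarrow> odd (d - k) = (odd d \<noteq> odd k)" by auto
    thus ?thesis using cn by (auto simp: Suc_diff_le)
  qed
  also have "\<dots> \<longleftrightarrow> even (length s) \<and> rev s = s \<and> t"
  proof (cases "even d")
    case True
    have "\<not> (\<forall>k<Suc d. u ! (d - k) = (u ! k \<noteq> even d))"
    proof
      assume "\<forall>k<Suc d. u ! (d - k) = (u ! k \<noteq> even d)"
      hence "u ! (d - d div 2) = (u ! (d div 2) \<noteq> True)" using True by auto
      moreover have "d - d div 2 = d div 2" using True by auto
      ultimately show False by simp
    qed
    moreover have "odd (length s)" using True by (simp add: d_def)
    ultimately show ?thesis by simp
  next
    case False
    have "(\<forall>k<Suc d. u ! (d - k) = (u ! k \<noteq> even d)) \<longleftrightarrow> rev u = u"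
      using False by (auto simp: list_eq_iff_nth_eq rev_nth lu)
    also have "\<dots> \<longleftrightarrow> rev s = s \<and> t" by (auto simp: u_def)
    finally show ?thesis using False by (simp add: d_def)
  qed
  finally show ?thesis .
qed

definition fcan :: "edge \<Rightarrow> bool" where
  "fcan e = ((\<exists>a b. e = south_edge (a, b) \<and> odd (a + b)) \<or> (\<exists>a b. e = west_edge (a, b) \<and> even (a + b)))"

lemma south_inj: "south_edge (a, b) = south_edge (x, y) \<longleftrightarrow> a = x \<and> b = y"
  by (auto simp: south_edge_def doubleton_eq_iff)
lemma west_inj: "west_edge (a, b) = west_edge (x, y) \<longleftrightarrow> a = x \<and> b = y"
  by (auto simp: west_edge_def doubleton_eq_iff)
lemma south_west: "south_edge (a, b) \<noteq> west_edge (x, y)"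
  by (auto simp: south_edge_def west_edge_def doubleton_eq_iff)

lemma fcan_S: "fcan (south_edge (x, y)) = odd (x + y)"
  unfolding fcan_def using south_inj south_west by metis
lemma fcan_W: "fcan (west_edge (x, y)) = even (x + y)"
  unfolding fcan_def using west_inj south_west by metis

lemma fcan_sign: "sign_function s fcan"
proof -
  have "\<And>x y. fcan (north_edge (x, y)) = fcan (west_edge (x, y)) \<and>
        fcan (south_edge (x, y)) = fcan (east_edge (x, y)) \<and>
        fcan (north_edge (x, y)) \<noteq> fcan (south_edge (x, y))"
  proof -
    fix x y :: int
    have "north_edge (x, y) = south_edge (x, y + 1)" by (simp add: north_edge_def south_edge_def)
    moreover have "east_edge (x, y) = west_edge (x + 1, y)" by (simp add: east_edge_def west_edge_def)
    ultimately show "?thesis x y" by (simp add: fcan_S fcan_W algebra_simps)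
  qed
  thus ?thesis unfolding sign_function_def Let_def by (metis surj_pair)
qed

lemma pal_main: "palindromic_even s \<longleftrightarrow> even (length s) \<and> rev s = s"
proof
  assume "palindromic_even s"
  then obtain a f ed b where a: "\<forall>x\<in>set a. 0 < x" "even (length a)" "rev a = a"
    and n: "int (num_tiles s) = int (sum_list a) - 1"
    and f: "sign_function s f"
    and ed: "ed \<in> {north_edge (tile_pos s (num_tiles s - 1)), east_edge (tile_pos s (num_tiles s - 1))}"
    and e: "[f (south_edge (tile_pos s 0))] @ map (\<lambda>i. f (inner_edge s i)) [0..<length s] @ [f ed]
          = alt_seq b a"
    unfolding palindromic_even_def is_snake_of_seq_def by blast
  define c where "c = alt_seq b a"
  have ce: "c = cseq (f (south_edge (tile_pos s 0))) s (ed = north_edge (tile_pos s (num_tiles s - 1)))"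
    using seq_eq[OF f ed] e c_def by simp
  have "c \<noteq> []" using ce by (simp add: cseq_def)
  hence "rev c = map Not c" using pal_iff[of c] a c_def by blast
  thus "even (length s) \<and> rev s = s" using K ce by metis
next
  assume h: "even (length s) \<and> rev s = s"
  define ed where "ed = north_edge (tile_pos s (num_tiles s - 1))"
  define c where "c = cseq (fcan (south_edge (tile_pos s 0))) s True"
  have ce: "[fcan (south_edge (tile_pos s 0))] @ map (\<lambda>i. fcan (inner_edge s i)) [0..<length s] @ [fcan ed] = c"
    using seq_eq[OF fcan_sign, of ed] by (simp add: ed_def c_def)
  have lc: "length c = length s + 2" by (simp add: c_def cseq_def)
  have "rev c = map Not c" using K h c_def by blast
  moreover have "c \<noteq> []" using lc by auto
  ultimately obtain a b where a: "\<forall>x\<in>set a. 0 < x" "even (length a)" "rev a = a" "alt_seq b a = c"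
    using pal_iff[of c] by blast
  have "sum_list a = length s + 2" using alt_len[of b a] a(4) lc by simp
  hence n: "int (num_tiles s) = int (sum_list a) - 1" by (simp add: num_tiles_def)
  have "is_snake_of_seq s a"
    unfolding is_snake_of_seq_def using a n fcan_sign ce ed_def by blast
  thus "palindromic_even s" unfolding palindromic_even_def using a by blast
qed

theorem theorem3p7:
  fixes s :: "bool list"
  shows "palindromic_even s \<longleftrightarrow> rot_symmetric_at_tile s"
  using pal_main rot_iff by simp


end
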